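(* Let $M$ be a smooth manifold and let $\Xi$ be the set of all splittings on $M$. The group $\mathcal A$ of gauge transformations acts transitively on $\Xi$: for any two splittings $\varepsilon_0,\varepsilon_1$ on $M$ there exists $f\in\mathcal A$ with $\varepsilon_0=f\varepsilon_1$.
   Context: $M$ is a smooth manifold of dimension $n\ge2$. A splitting $\varepsilon$ on $M$ assigns to each $(p,q)\in M\times M$ a linear isomorphism $\varepsilon(p,q):T_pM\to T_qM$, smooth in $(p,q)$, with $\varepsilon(q,r)\circ\varepsilon(p,q)=\varepsilon(p,r)$ and $\varepsilon(p,p)=\mathrm{id}$. A gauge transformation is a smooth section $f$ of the bundle of invertible endomorphisms of $TM$, i.e. a smooth assignment $x\mapsto f(x)\in GL(T_xM)$; they form a group $\mathcal A$ under pointwise composition. $\mathcal A$ acts on splittings by $(f\varepsilon)(p,q)=f(q)\circ\varepsilon(p,q)\circ f(p)^{-1}$; in coordinates $(f\varepsilon)^i_j(x,y)=f^i_a(y)\varepsilon^a_b(x,y)g^b_j(x)$ where $g=f^{-1}$. *)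

theory Defs
  imports "HOL-Analysis.Analysis"
begin

text \<open>C k S f: f is k times continuously differentiable on S, expressed via
  partial derivatives D i (one for each basis vector i).  For open S this is
  the usual notion; smooth_on S f means C^infinity.\<close>

fun Ck :: "nat \<Rightarrow> 'a::euclidean_space set \<Rightarrow> ('a \<Rightarrow> 'b::real_normed_vector) \<Rightarrow> bool" where
  "Ck 0 S f = continuous_on S f"
| "Ck (Suc k) S f =
     (\<exists>D :: 'a \<Rightarrow> 'a \<Rightarrow> 'b.
        (\<forall>x\<in>S. (f has_derivative (\<lambda>h. \<Sum>i\<in>Basis. (h \<bullet> i) *\<^sub>R D i x)) (at x))
        \<and> (\<forall>i\<in>Basis. Ck k S (D i)))"

definition smooth_on :: "'a::euclidean_space set \<Rightarrow> ('a \<Rightarrow> 'b::real_normed_vector) \<Rightarrow> bool" where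
  "smooth_on S f \<longleftrightarrow> (\<forall>k. Ck k S f)"

text \<open>A chart is a pair (U, phi) with U open in M and phi a homeomorphism of U
  onto an open subset of real^'n.  The manifold M is the whole carrier type 'm
  (Hausdorff, second countable).\<close>

type_synonym ('m, 'n) chart = "'m set \<times> ('m \<Rightarrow> real ^ 'n)"

definition is_chart :: "('m::topological_space, 'n::finite) chart \<Rightarrow> bool" where
  "is_chart c \<longleftrightarrow> (case c of (U, \<phi>) \<Rightarrow>
      open U \<and> open (\<phi> ` U) \<and> (\<exists>\<psi>. homeomorphism U (\<phi> ` U) \<phi> \<psi>))"

definition transition :: "('m, 'n::finite) chart \<Rightarrow> ('m, 'n) chart \<Rightarrow> real ^ 'n \<Rightarrow> real ^ 'n" where
  "transition c d = (case c of (U, \<phi>) \<Rightarrow> case d of (V, \<psi>) \<Rightarrow> \<psi> \<circ> inv_into U \<phi>)"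

definition smooth_atlas :: "('m::topological_space, 'n::finite) chart set \<Rightarrow> bool" where
  "smooth_atlas A \<longleftrightarrow>
     (\<forall>c\<in>A. is_chart c) \<and>
     (\<Union>c\<in>A. fst c) = UNIV \<and>
     (\<forall>c\<in>A. \<forall>d\<in>A. smooth_on (snd c ` (fst c \<inter> fst d)) (transition c d))"

text \<open>Jacobian matrix of the transition map from chart c to chart d at the point
  x (given in c-coordinates).  It transforms coordinates of tangent vectors
  w.r.t. c into coordinates w.r.t. d.\<close>

definition jac :: "('m, 'n::finite) chart \<Rightarrow> ('m, 'n) chart \<Rightarrow> real ^ 'n \<Rightarrow> real ^ 'n ^ 'n" where
  "jac c d x = matrix (frechet_derivative (transition c d) (at x))"

text \<open>A splitting is given by its coordinate matrices: E c d p q is the matrix of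
  eps(p,q) : T_pM \<rightarrow> T_qM w.r.t. the coordinate bases of chart c at p and chart d
  at q (defined for p in the domain of c and q in the domain of d).  These are
  required to transform correctly under change of charts, so that they describe
  one chart-independent map eps(p,q).\<close>

definition splitting :: "('m::topological_space, 'n::finite) chart set \<Rightarrow>
    (('m, 'n) chart \<Rightarrow> ('m, 'n) chart \<Rightarrow> 'm \<Rightarrow> 'm \<Rightarrow> real ^ 'n ^ 'n) \<Rightarrow> bool" where
  "splitting A E \<longleftrightarrow>
     \<comment> \<open>chart compatibility (E describes a well-defined map T_pM \<rightarrow> T_qM)\<close>
     (\<forall>c\<in>A. \<forall>c'\<in>A. \<forall>d\<in>A. \<forall>d'\<in>A. \<forall>p\<in>fst c \<inter> fst c'. \<forall>q\<in>fst d \<inter> fst d'.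
        E c' d' p q = jac d d' (snd d q) ** E c d p q ** jac c' c (snd c' p)) \<and>
     \<comment> \<open>each eps(p,q) is a linear isomorphism\<close>
     (\<forall>c\<in>A. \<forall>d\<in>A. \<forall>p\<in>fst c. \<forall>q\<in>fst d. invertible (E c d p q)) \<and>
     \<comment> \<open>smooth in (p,q)\<close>
     (\<forall>c\<in>A. \<forall>d\<in>A. smooth_on (snd c ` fst c \<times> snd d ` fst d)
        (\<lambda>(x, y). E c d (inv_into (fst c) (snd c) x) (inv_into (fst d) (snd d) y))) \<and>
     \<comment> \<open>eps(q,r) o eps(p,q) = eps(p,r)\<close>
     (\<forall>c\<in>A. \<forall>d\<in>A. \<forall>e\<in>A. \<forall>p\<in>fst c. \<forall>q\<in>fst d. \<forall>r\<in>fst e.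
        E d e q r ** E c d p q = E c e p r) \<and>
     \<comment> \<open>eps(p,p) = id\<close>
     (\<forall>c\<in>A. \<forall>p\<in>fst c. E c c p p = mat 1)"

text \<open>A gauge transformation is a smooth section f of GL(TM), given by its
  coordinate matrices F c p (matrix of f(p) in the coordinate basis of c).\<close>

definition gauge :: "('m::topological_space, 'n::finite) chart set \<Rightarrow>
    (('m, 'n) chart \<Rightarrow> 'm \<Rightarrow> real ^ 'n ^ 'n) \<Rightarrow> bool" where
  "gauge A F \<longleftrightarrow>
     (\<forall>c\<in>A. \<forall>c'\<in>A. \<forall>p\<in>fst c \<inter> fst c'.
        F c' p = jac c c' (snd c p) ** F c p ** jac c' c (snd c' p)) \<and>
     (\<forall>c\<in>A. \<forall>p\<in>fst c. invertible (F c p)) \<and>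
     (\<forall>c\<in>A. smooth_on (snd c ` fst c) (\<lambda>x. F c (inv_into (fst c) (snd c) x)))"

definition gauge_act ::
    "(('m, 'n::finite) chart \<Rightarrow> 'm \<Rightarrow> real ^ 'n ^ 'n) \<Rightarrow>
     (('m, 'n) chart \<Rightarrow> ('m, 'n) chart \<Rightarrow> 'm \<Rightarrow> 'm \<Rightarrow> real ^ 'n ^ 'n) \<Rightarrow>
     (('m, 'n) chart \<Rightarrow> ('m, 'n) chart \<Rightarrow> 'm \<Rightarrow> 'm \<Rightarrow> real ^ 'n ^ 'n)" where
  "gauge_act F E = (\<lambda>c d p q. F d q ** E c d p q ** matrix_inv (F c p))"

definition splitting_eq :: "('m, 'n::finite) chart set \<Rightarrow>
    (('m, 'n) chart \<Rightarrow> ('m, 'n) chart \<Rightarrow> 'm \<Rightarrow> 'm \<Rightarrow> real ^ 'n ^ 'n) \<Rightarrow>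
    (('m, 'n) chart \<Rightarrow> ('m, 'n) chart \<Rightarrow> 'm \<Rightarrow> 'm \<Rightarrow> real ^ 'n ^ 'n) \<Rightarrow> bool" where
  "splitting_eq A E E' \<longleftrightarrow>
     (\<forall>c\<in>A. \<forall>d\<in>A. \<forall>p\<in>fst c. \<forall>q\<in>fst d. E c d p q = E' c d p q)"

end

theory Submission imports Defs begin

lemma Ck_add: "Ck k S f \<Longrightarrow> Ck k S g \<Longrightarrow> Ck k S (\<lambda>x. f x + g x)"
proof (induction k arbitrary: f g)
  case 0 then show ?case by (auto intro: continuous_on_add)
next
  case (Suc k)
  from Suc.prems obtain Df Dg where
    f: "\<forall>x\<in>S. (f has_derivative (\<lambda>h. \<Sum>i\<in>Basis. (h \<bullet> i) *\<^sub>R Df i x)) (at x)" "\<forall>i\<in>Basis. Ck k S (Df i)"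
    and g: "\<forall>x\<in>S. (g has_derivative (\<lambda>h. \<Sum>i\<in>Basis. (h \<bullet> i) *\<^sub>R Dg i x)) (at x)" "\<forall>i\<in>Basis. Ck k S (Dg i)"
    by auto
  have der: "((\<lambda>x. f x + g x) has_derivative (\<lambda>h. \<Sum>i\<in>Basis. (h \<bullet> i) *\<^sub>R (Df i x + Dg i x))) (at x)" if x: "x \<in> S" for x
  proof (rule has_derivative_eq_rhs[OF has_derivative_add])
    show "(f has_derivative (\<lambda>h. \<Sum>i\<in>Basis. (h \<bullet> i) *\<^sub>R Df i x)) (at x)" using f x by blast
    show "(g has_derivative (\<lambda>h. \<Sum>i\<in>Basis. (h \<bullet> i) *\<^sub>R Dg i x)) (at x)" using g x by blast
    show "(\<lambda>h. (\<Sum>i\<in>Basis. (h \<bullet> i) *\<^sub>R Df i x) + (\<Sum>i\<in>Basis. (h \<bullet> i) *\<^sub>R Dg i x)) =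
      (\<lambda>h. \<Sum>i\<in>Basis. (h \<bullet> i) *\<^sub>R (Df i x + Dg i x))"
      by (simp only: scaleR_add_right sum.distrib)
  qed
  have ck: "Ck k S (\<lambda>x. Df i x + Dg i x)" if i: "i \<in> Basis" for i
    using Suc.IH f(2) g(2) i by blast
  show ?case
    unfolding Ck.simps
    apply (rule exI[of _ "\<lambda>i x. Df i x + Dg i x"])
    apply (intro conjI ballI)
     apply (erule der)
    by (erule ck)
qed

lemma Ck_Suc_imp: "Ck (Suc k) S f \<Longrightarrow> Ck k S f"
proof (induction k arbitrary: f)
  case 0
  then obtain D where D: "\<forall>x\<in>S. (f has_derivative (\<lambda>h. \<Sum>i\<in>Basis. (h \<bullet> i) *\<^sub>R D i x)) (at x)"
    unfolding Ck.simps by blast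
  have "\<forall>x\<in>S. isCont f x" using D has_derivative_continuous by blast
  then show ?case unfolding Ck.simps by (rule continuous_at_imp_continuous_on)
next
  case (Suc k)
  from Suc.prems obtain D where
    D: "\<forall>x\<in>S. (f has_derivative (\<lambda>h. \<Sum>i\<in>Basis. (h \<bullet> i) *\<^sub>R D i x)) (at x)"
       "\<forall>i\<in>Basis. Ck (Suc k) S (D i)"
    unfolding Ck.simps(2)[of "Suc k"] by blast
  have "\<forall>i\<in>Basis. Ck k S (D i)" using D(2) Suc.IH by blast
  then show ?case unfolding Ck.simps(2)[of k] using D(1) by blast
qed

lemma Ck_bilinear:
  fixes prod :: "'b::real_normed_vector \<Rightarrow> 'c::real_normed_vector \<Rightarrow> 'd::real_normed_vector"
    and f :: "'a::euclidean_space \<Rightarrow> 'b" and g :: "'a \<Rightarrow> 'c"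
  assumes bb: "bounded_bilinear prod"
  shows "Ck k S f \<Longrightarrow> Ck k S g \<Longrightarrow> Ck k S (\<lambda>x. prod (f x) (g x))"
proof (induction k arbitrary: f g)
  case 0 then show ?case
    unfolding Ck.simps by (intro bounded_bilinear.continuous_on[OF bb]) simp_all
next
  case (Suc k)
  from Suc.prems obtain Df Dg where
    f: "\<forall>x\<in>S. (f has_derivative (\<lambda>h. \<Sum>i\<in>Basis. (h \<bullet> i) *\<^sub>R Df i x)) (at x)" "\<forall>i\<in>Basis. Ck k S (Df i)"
    and g: "\<forall>x\<in>S. (g has_derivative (\<lambda>h. \<Sum>i\<in>Basis. (h \<bullet> i) *\<^sub>R Dg i x)) (at x)" "\<forall>i\<in>Basis. Ck k S (Dg i)"
    by auto
  have fk: "Ck k S f" and gk: "Ck k S g" using Suc.prems Ck_Suc_imp by auto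
  have der: "(((\<lambda>x. prod (f x) (g x))) has_derivative (\<lambda>h. \<Sum>i\<in>Basis. (h \<bullet> i) *\<^sub>R (prod (f x) (Dg i x) + prod (Df i x) (g x)))) (at x)" if x: "x \<in> S" for x
  proof (rule has_derivative_eq_rhs[OF bounded_bilinear.FDERIV[OF bb]])
    show "(f has_derivative (\<lambda>h. \<Sum>i\<in>Basis. (h \<bullet> i) *\<^sub>R Df i x)) (at x)" using f x by blast
    show "(g has_derivative (\<lambda>h. \<Sum>i\<in>Basis. (h \<bullet> i) *\<^sub>R Dg i x)) (at x)" using g x by blast
    show "(\<lambda>h. prod (f x) (\<Sum>i\<in>Basis. (h \<bullet> i) *\<^sub>R Dg i x) + prod (\<Sum>i\<in>Basis. (h \<bullet> i) *\<^sub>R Df i x) (g x)) =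
      (\<lambda>h. \<Sum>i\<in>Basis. (h \<bullet> i) *\<^sub>R (prod (f x) (Dg i x) + prod (Df i x) (g x)))"
      by (simp only: bounded_bilinear.sum_left[OF bb] bounded_bilinear.sum_right[OF bb]
            bounded_bilinear.scaleR_left[OF bb] bounded_bilinear.scaleR_right[OF bb]
            scaleR_add_right sum.distrib)
  qed
  have ck: "Ck k S (\<lambda>x. prod (f x) (Dg i x) + prod (Df i x) (g x))" if i: "i \<in> Basis" for i
    apply (rule Ck_add)
     apply (rule Suc.IH[OF fk]) using g i apply blast
    apply (rule Suc.IH[OF _ gk]) using f i by blast
  show ?case
    unfolding Ck.simps
    apply (rule exI[of _ "\<lambda>i x. prod (f x) (Dg i x) + prod (Df i x) (g x)"])
    apply (intro conjI ballI)
     apply (erule der)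
    by (erule ck)
qed

lemma sum_Basis_prod_gen:
  fixes f :: "('a::euclidean_space \<times> 'b::euclidean_space) \<Rightarrow> 'c::comm_monoid_add"
  shows "sum f Basis = sum (\<lambda>i. f (i, 0)) Basis + sum (\<lambda>i. f (0, i)) Basis"
proof -
  have "inj_on (\<lambda>u. (u::'a, 0::'b)) Basis" "inj_on (\<lambda>u. (0::'a, u::'b)) Basis"
    by (auto intro!: inj_onI Pair_inject)
  thus ?thesis
    unfolding Basis_prod_def
    by (subst sum.union_disjoint) (auto simp: Basis_prod_def sum.reindex)
qed

lemma Ck_slice2:
  fixes f :: "('a::euclidean_space \<times> 'b::euclidean_space) \<Rightarrow> 'c::real_normed_vector"
  shows "Ck k (S \<times> T) f \<Longrightarrow> x0 \<in> S \<Longrightarrow> Ck k T (\<lambda>y. f (x0, y))"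
proof (induction k arbitrary: f)
  case 0
  have "continuous_on T (f \<circ> (\<lambda>y. (x0, y)))"
    apply (rule continuous_on_compose)
     apply (intro continuous_intros)
    using 0 by (auto elim: continuous_on_subset)
  then show ?case by (simp add: o_def)
next
  case (Suc k)
  from Suc.prems obtain D where
    f: "\<forall>z\<in>S\<times>T. (f has_derivative (\<lambda>h. \<Sum>i\<in>Basis. (h \<bullet> i) *\<^sub>R D i z)) (at z)" "\<forall>i\<in>Basis. Ck k (S\<times>T) (D i)"
    by auto
  have der: "((\<lambda>y. f (x0, y)) has_derivative (\<lambda>h. \<Sum>i\<in>Basis. (h \<bullet> i) *\<^sub>R D (0, i) (x0, y))) (at y)"
    if y: "y \<in> T" for y
  proof -
    have "((\<lambda>y. f (x0, y)) has_derivative (\<lambda>h. \<Sum>i\<in>Basis. ((0, h) \<bullet> i) *\<^sub>R D i (x0, y))) (at y)"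
      apply (rule has_derivative_compose[of "\<lambda>y. (x0, y)" "\<lambda>h. (0, h)" y UNIV f])
       apply (intro derivative_intros)
      using f y Suc.prems(2) by auto
    then show ?thesis
      by (simp add: sum_Basis_prod_gen)
  qed
  have ck: "Ck k T (\<lambda>y. D (0, i) (x0, y))" if i: "i \<in> Basis" for i
    apply (rule Suc.IH[OF _ Suc.prems(2)])
    using f i by (auto simp: Basis_prod_def)
  show ?case
    unfolding Ck.simps
    apply (rule exI[of _ "\<lambda>i y. D (0, i) (x0, y)"])
    apply (intro conjI ballI)
     apply (erule der)
    by (erule ck)
qed

lemma Ck_slice1:
  fixes f :: "('a::euclidean_space \<times> 'b::euclidean_space) \<Rightarrow> 'c::real_normed_vector"
  shows "Ck k (S \<times> T) f \<Longrightarrow> y0 \<in> T \<Longrightarrow> Ck k S (\<lambda>x. f (x, y0))"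
proof (induction k arbitrary: f)
  case 0
  have "continuous_on S (f \<circ> (\<lambda>x. (x, y0)))"
    apply (rule continuous_on_compose)
     apply (intro continuous_intros)
    using 0 by (auto elim: continuous_on_subset)
  then show ?case by (simp add: o_def)
next
  case (Suc k)
  from Suc.prems obtain D where
    f: "\<forall>z\<in>S\<times>T. (f has_derivative (\<lambda>h. \<Sum>i\<in>Basis. (h \<bullet> i) *\<^sub>R D i z)) (at z)" "\<forall>i\<in>Basis. Ck k (S\<times>T) (D i)"
    by auto
  have der: "((\<lambda>x. f (x, y0)) has_derivative (\<lambda>h. \<Sum>i\<in>Basis. (h \<bullet> i) *\<^sub>R D (i, 0) (x, y0))) (at x)"
    if x: "x \<in> S" for x
  proof -
    have "((\<lambda>x. f (x, y0)) has_derivative (\<lambda>h. \<Sum>i\<in>Basis. ((h, 0) \<bullet> i) *\<^sub>R D i (x, y0))) (at x)"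
      apply (rule has_derivative_compose[of "\<lambda>x. (x, y0)" "\<lambda>h. (h, 0)" x UNIV f])
       apply (intro derivative_intros)
      using f x Suc.prems(2) by auto
    then show ?thesis
      by (simp add: sum_Basis_prod_gen)
  qed
  have ck: "Ck k S (\<lambda>x. D (i, 0) (x, y0))" if i: "i \<in> Basis" for i
    apply (rule Suc.IH[OF _ Suc.prems(2)])
    using f i by (auto simp: Basis_prod_def)
  show ?case
    unfolding Ck.simps
    apply (rule exI[of _ "\<lambda>i x. D (i, 0) (x, y0)"])
    apply (intro conjI ballI)
     apply (erule der)
    by (erule ck)
qed

lemma smooth_slice2:
  fixes f :: "('a::euclidean_space \<times> 'b::euclidean_space) \<Rightarrow> 'c::real_normed_vector"
  shows "smooth_on (S \<times> T) f \<Longrightarrow> x0 \<in> S \<Longrightarrow> smooth_on T (\<lambda>y. f (x0, y))"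
  unfolding smooth_on_def using Ck_slice2 by blast

lemma smooth_slice1:
  fixes f :: "('a::euclidean_space \<times> 'b::euclidean_space) \<Rightarrow> 'c::real_normed_vector"
  shows "smooth_on (S \<times> T) f \<Longrightarrow> y0 \<in> T \<Longrightarrow> smooth_on S (\<lambda>x. f (x, y0))"
  unfolding smooth_on_def using Ck_slice1 by blast

lemma my_matrix_add_rdistrib: "((B + C) ** A) = (B ** A) + (C ** (A::real^'n^'n))"
  by (vector matrix_matrix_mult_def sum.distrib[symmetric] field_simps)

lemma bb_matrix_mult: "bounded_bilinear ((**) :: real^'n^'n \<Rightarrow> real^'n^'n \<Rightarrow> real^'n^'n)"
proof -
  have "bilinear ((**) :: real^'n^'n \<Rightarrow> real^'n^'n \<Rightarrow> real^'n^'n)"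
    unfolding bilinear_def
    by (auto intro!: linearI simp: matrix_add_ldistrib my_matrix_add_rdistrib matrix_scalar_ac scalar_matrix_assoc)
  then show ?thesis by (simp add: bilinear_conv_bounded_bilinear)
qed

lemma smooth_mult:
  fixes f g :: "'a::euclidean_space \<Rightarrow> real^'n^'n"
  shows "smooth_on S f \<Longrightarrow> smooth_on S g \<Longrightarrow> smooth_on S (\<lambda>x. f x ** g x)"
  unfolding smooth_on_def using Ck_bilinear[OF bb_matrix_mult] by blast

lemma matrix_inv_eq:
  fixes A B :: "real^'n^'n"
  assumes "A ** B = mat 1"
  shows "matrix_inv A = B"
proof -
  have BA: "B ** A = mat 1" using assms matrix_left_right_inverse by blast
  have "\<exists>A'. A ** A' = mat 1 \<and> A' ** A = mat 1" using assms BA by blast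
  then have "A ** matrix_inv A = mat 1 \<and> matrix_inv A ** A = mat 1"
    unfolding matrix_inv_def by (rule someI_ex)
  then have "matrix_inv A = matrix_inv A ** (A ** B)" using assms by simp
  also have "\<dots> = B" using \<open>A ** matrix_inv A = mat 1 \<and> matrix_inv A ** A = mat 1\<close>
    by (simp add: matrix_mul_assoc)
  finally show ?thesis .
qed

lemma chart_inv:
  assumes "is_chart c" "p \<in> fst c"
  shows "inv_into (fst c) (snd c) (snd c p) = p"
proof -
  obtain U \<phi> where c: "c = (U, \<phi>)" by (cases c)
  then obtain \<psi> where "homeomorphism U (\<phi> ` U) \<phi> \<psi>" using assms(1) unfolding is_chart_def by auto
  then have "inj_on \<phi> U" by (metis homeomorphism_apply1 inj_on_inverseI)
  then show ?thesis using assms(2) c by (simp add: inv_into_f_f)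
qed

theorem lemma11:
  fixes A :: "('m::{t2_space, second_countable_topology}, 'n::finite) chart set"
  assumes "CARD('n) \<ge> 2"
    and "smooth_atlas A"
    and "splitting A E0"
    and "splitting A E1"
  shows "\<exists>F. gauge A F \<and> splitting_eq A E0 (gauge_act F E1)"
proof -
  note S = assms(2)[unfolded smooth_atlas_def]
  note P0 = assms(3)[unfolded splitting_def]
  note P1 = assms(4)[unfolded splitting_def]
  obtain p0 :: 'm where True by simp
  have "p0 \<in> (\<Union>c\<in>A. fst c)" using S[THEN conjunct2, THEN conjunct1] by simp
  then obtain c0 where c0: "c0 \<in> A" "p0 \<in> fst c0" by blast
  define F where "F d q = E0 c0 d p0 q ** E1 d c0 q p0" for d q
  have compat0: "\<And>c c' d d' p q. c\<in>A \<Longrightarrow> c'\<in>A \<Longrightarrow> d\<in>A \<Longrightarrow> d'\<in>A \<Longrightarrow> p\<in>fst c \<Longrightarrow> p\<in>fst c' \<Longrightarrow> q\<in>fst d \<Longrightarrow> q\<in>fst d' \<Longrightarrow>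
        E0 c' d' p q = jac d d' (snd d q) ** E0 c d p q ** jac c' c (snd c' p)"
    using P0[THEN conjunct1, rule_format] by (meson IntI)
  have compat1: "\<And>c c' d d' p q. c\<in>A \<Longrightarrow> c'\<in>A \<Longrightarrow> d\<in>A \<Longrightarrow> d'\<in>A \<Longrightarrow> p\<in>fst c \<Longrightarrow> p\<in>fst c' \<Longrightarrow> q\<in>fst d \<Longrightarrow> q\<in>fst d' \<Longrightarrow>
        E1 c' d' p q = jac d d' (snd d q) ** E1 c d p q ** jac c' c (snd c' p)"
    using P1[THEN conjunct1, rule_format] by (meson IntI)
  have inv0: "\<And>c d p q. c\<in>A \<Longrightarrow> d\<in>A \<Longrightarrow> p\<in>fst c \<Longrightarrow> q\<in>fst d \<Longrightarrow> invertible (E0 c d p q)"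
    by (rule P0[THEN conjunct2, THEN conjunct1, rule_format])
  have inv1: "\<And>c d p q. c\<in>A \<Longrightarrow> d\<in>A \<Longrightarrow> p\<in>fst c \<Longrightarrow> q\<in>fst d \<Longrightarrow> invertible (E1 c d p q)"
    by (rule P1[THEN conjunct2, THEN conjunct1, rule_format])
  have sm0: "\<And>c d. c\<in>A \<Longrightarrow> d\<in>A \<Longrightarrow> smooth_on (snd c ` fst c \<times> snd d ` fst d)
        (\<lambda>(x, y). E0 c d (inv_into (fst c) (snd c) x) (inv_into (fst d) (snd d) y))"
    by (rule P0[THEN conjunct2, THEN conjunct2, THEN conjunct1, rule_format])
  have sm1: "\<And>c d. c\<in>A \<Longrightarrow> d\<in>A \<Longrightarrow> smooth_on (snd c ` fst c \<times> snd d ` fst d)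
        (\<lambda>(x, y). E1 c d (inv_into (fst c) (snd c) x) (inv_into (fst d) (snd d) y))"
    by (rule P1[THEN conjunct2, THEN conjunct2, THEN conjunct1, rule_format])
  have coc0: "\<And>c d e p q r. c\<in>A \<Longrightarrow> d\<in>A \<Longrightarrow> e\<in>A \<Longrightarrow> p\<in>fst c \<Longrightarrow> q\<in>fst d \<Longrightarrow> r\<in>fst e \<Longrightarrow>
        E0 d e q r ** E0 c d p q = E0 c e p r"
    by (rule P0[THEN conjunct2, THEN conjunct2, THEN conjunct2, THEN conjunct1, rule_format])
  have coc1: "\<And>c d e p q r. c\<in>A \<Longrightarrow> d\<in>A \<Longrightarrow> e\<in>A \<Longrightarrow> p\<in>fst c \<Longrightarrow> q\<in>fst d \<Longrightarrow> r\<in>fst e \<Longrightarrow>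
        E1 d e q r ** E1 c d p q = E1 c e p r"
    by (rule P1[THEN conjunct2, THEN conjunct2, THEN conjunct2, THEN conjunct1, rule_format])
  have id0: "\<And>c p. c\<in>A \<Longrightarrow> p\<in>fst c \<Longrightarrow> E0 c c p p = mat 1"
    by (rule P0[THEN conjunct2, THEN conjunct2, THEN conjunct2, THEN conjunct2, rule_format])
  have id1: "\<And>c p. c\<in>A \<Longrightarrow> p\<in>fst c \<Longrightarrow> E1 c c p p = mat 1"
    by (rule P1[THEN conjunct2, THEN conjunct2, THEN conjunct2, THEN conjunct2, rule_format])

  define K where "K = jac c0 c0 (snd c0 p0)"
  have KK: "K ** K = mat 1"
    using compat0[OF c0(1) c0(1) c0(1) c0(1) c0(2) c0(2) c0(2) c0(2)] id0[OF c0] unfolding K_def by simp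

  have g1: "F c' p = jac c c' (snd c p) ** F c p ** jac c' c (snd c' p)"
    if c: "c \<in> A" "c' \<in> A" "p \<in> fst c" "p \<in> fst c'" for c c' p
  proof -
    have a: "E0 c0 c' p0 p = jac c c' (snd c p) ** E0 c0 c p0 p ** K"
      unfolding K_def using compat0[OF c0(1) c0(1) c(1) c(2) c0(2) c0(2) c(3) c(4)] .
    have b: "E1 c' c0 p p0 = K ** E1 c c0 p p0 ** jac c' c (snd c' p)"
      unfolding K_def using compat1[OF c(1) c(2) c0(1) c0(1) c(3) c(4) c0(2) c0(2)] .
    have "F c' p = jac c c' (snd c p) ** E0 c0 c p0 p ** (K ** K) ** E1 c c0 p p0 ** jac c' c (snd c' p)"
      unfolding F_def a b by (simp add: matrix_mul_assoc)
    then show ?thesis unfolding KK F_def by (simp add: matrix_mul_assoc)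
  qed
  have g2: "invertible (F c p)" if "c \<in> A" "p \<in> fst c" for c p
    unfolding F_def using that c0 by (intro invertible_mult inv0 inv1)
  have g3: "smooth_on (snd c ` fst c) (\<lambda>x. F c (inv_into (fst c) (snd c) x))" if c: "c \<in> A" for c
  proof -
    have x0: "snd c0 p0 \<in> snd c0 ` fst c0" using c0 by simp
    have ic0: "inv_into (fst c0) (snd c0) (snd c0 p0) = p0" using chart_inv[OF S[THEN conjunct1, rule_format, OF c0(1)] c0(2)] .
    have s1: "smooth_on (snd c ` fst c) (\<lambda>y. E0 c0 c p0 (inv_into (fst c) (snd c) y))"
      using smooth_slice2[OF sm0[OF c0(1) c] x0] ic0 by simp
    have s2: "smooth_on (snd c ` fst c) (\<lambda>y. E1 c c0 (inv_into (fst c) (snd c) y) p0)"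
      using smooth_slice1[OF sm1[OF c c0(1)] x0] ic0 by simp
    show ?thesis unfolding F_def by (rule smooth_mult[OF s1 s2])
  qed
  have gauge: "gauge A F" unfolding gauge_def using g1 g2 g3 by blast
  have Finv: "matrix_inv (F c p) = E1 c0 c p0 p ** E0 c c0 p p0" if c: "c \<in> A" "p \<in> fst c" for c p
  proof (rule matrix_inv_eq)
    have "F c p ** (E1 c0 c p0 p ** E0 c c0 p p0) = E0 c0 c p0 p ** (E1 c c0 p p0 ** E1 c0 c p0 p) ** E0 c c0 p p0"
      unfolding F_def by (simp add: matrix_mul_assoc)
    also have "\<dots> = E0 c0 c p0 p ** E0 c c0 p p0"
      using coc1[OF c0(1) c(1) c0(1) c0(2) c(2) c0(2)] id1[OF c0] by simp
    also have "\<dots> = mat 1"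
      using coc0[OF c(1) c0(1) c(1) c(2) c0(2) c(2)] id0[OF c] by simp
    finally show "F c p ** (E1 c0 c p0 p ** E0 c c0 p p0) = mat 1" .
  qed
  have eq: "E0 c d p q = gauge_act F E1 c d p q"
    if c: "c \<in> A" "d \<in> A" "p \<in> fst c" "q \<in> fst d" for c d p q
  proof -
    have "gauge_act F E1 c d p q = E0 c0 d p0 q ** (E1 d c0 q p0 ** E1 c d p q) ** E1 c0 c p0 p ** E0 c c0 p p0"
      unfolding gauge_act_def Finv[OF c(1,3)] by (simp add: F_def matrix_mul_assoc)
    also have "\<dots> = E0 c0 d p0 q ** (E1 c c0 p p0 ** E1 c0 c p0 p) ** E0 c c0 p p0"
      using coc1[OF c(1) c(2) c0(1) c(3) c(4) c0(2)] by (simp add: matrix_mul_assoc)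
    also have "\<dots> = E0 c0 d p0 q ** E0 c c0 p p0"
      using coc1[OF c0(1) c(1) c0(1) c0(2) c(3) c0(2)] id1[OF c0] by simp
    also have "\<dots> = E0 c d p q"
      using coc0[OF c(1) c0(1) c(2) c(3) c0(2) c(4)] by simp
    finally show ?thesis by simp
  qed
  show ?thesis using gauge eq unfolding splitting_eq_def by blast
qed

end
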